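(* Let $\boldsymbol z_f$ and $\boldsymbol z_g$ be random periodic features associated with functions $f,g \in \mathrm{PF}$, frequencies $\boldsymbol\omega_j \overset{\text{iid}}{\sim} \Lambda = \mathcal F K$ and dithers $\xi_j \overset{\text{iid}}{\sim} \mathcal U([0,2\pi))$. For any pair $\boldsymbol x,\boldsymbol y \in \mathbb R^d$, the expected kernel $\kappa_{f,g}(\boldsymbol x,\boldsymbol y) := \mathbb E_{\boldsymbol\Omega,\boldsymbol\xi} \langle \boldsymbol z_f(\boldsymbol x),\boldsymbol z_g(\boldsymbol y)\rangle$ satisfies $$\kappa_{f,g}(\boldsymbol x,\boldsymbol y) = \sum_{k \in \mathbb Z} F_k G_k^* \, K\big(k(\boldsymbol x-\boldsymbol y)\big) =: K_{f,g}(\boldsymbol x-\boldsymbol y).$$ Although expanded as an infinite series, this kernel is bounded, $|\kappa_{f,g}| \leq 1$, since $f,g \in \mathrm{PF}$.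
   Context: $\mathrm{PF} := \{ f:\mathbb R\to\mathbb C \mid f \text{ is } 2\pi\text{-periodic}, \int_0^{2\pi} f(t)\,dt = 0, \|f\|_\infty \le 1\}$. For $f\in\mathrm{PF}$, $f(t)=\sum_{k\in\mathbb Z} F_k e^{\mathrm i k t}$ with $F_k = \frac{1}{2\pi}\int_0^{2\pi} f(t) e^{-\mathrm i k t}dt$ (similarly $G_k$ for $g$). Random periodic features: $\boldsymbol z_f(\boldsymbol x) := \frac{1}{\sqrt m} f(\boldsymbol\Omega^\top \boldsymbol x + \boldsymbol\xi) \in \mathbb C^m$ (applied componentwise), with $\boldsymbol\Omega = (\boldsymbol\omega_1,\dots,\boldsymbol\omega_m) \in \mathbb R^{d\times m}$, $\boldsymbol\omega_j$ iid from a probability distribution $\Lambda$ on $\mathbb R^d$, and $\boldsymbol\xi$ with iid $\mathcal U([0,2\pi))$ entries; the same $\boldsymbol\Omega,\boldsymbol\xi$ are used for $\boldsymbol z_f$ and $\boldsymbol z_g$. $K:\mathbb R^d\to\mathbb C$ is the shift-invariant kernel function $K(\boldsymbol u) = (\mathcal F^{-1}\Lambda)(\boldsymbol u) = \int_{\mathbb R^d} e^{\mathrm i \boldsymbol\omega^\top \boldsymbol u}\,d\Lambda(\boldsymbol\omega)$, so $K(\boldsymbol 0)=1$. The inner product is $\langle \boldsymbol a,\boldsymbol b\rangle = \sum_j a_j b_j^*$. *)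

theory Defs
  imports "HOL-Probability.Probability"
begin

definition PF :: "(real \<Rightarrow> complex) set" where
  "PF = {f. f \<in> borel_measurable borel \<and>
            (\<forall>t. f (t + 2 * pi) = f t) \<and>
            (LBINT t=0..2*pi. f t) = 0 \<and>
            (\<forall>t. norm (f t) \<le> 1)}"

definition fourier_coeff :: "(real \<Rightarrow> complex) \<Rightarrow> int \<Rightarrow> complex" where
  "fourier_coeff f k = (LBINT t=0..2*pi. f t * cis (- (of_int k * t))) / (2 * pi)"

definition kernel_of :: "'a::euclidean_space measure \<Rightarrow> 'a \<Rightarrow> complex" where
  "kernel_of \<Lambda> u = (LINT \<omega>|\<Lambda>. cis (\<omega> \<bullet> u))"

definition freq_dither :: "'a::euclidean_space measure \<Rightarrow> ('a \<times> real) measure" where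
  "freq_dither \<Lambda> = \<Lambda> \<Otimes>\<^sub>M uniform_measure lborel {0..<2*pi}"

definition rpf :: "nat \<Rightarrow> (real \<Rightarrow> complex) \<Rightarrow> (nat \<Rightarrow> 'a::euclidean_space \<times> real) \<Rightarrow> 'a \<Rightarrow> nat \<Rightarrow> complex" where
  "rpf m f p x j = f (fst (p j) \<bullet> x + snd (p j)) / of_real (sqrt (real m))"

definition expected_kernel :: "nat \<Rightarrow> 'a::euclidean_space measure \<Rightarrow> (real \<Rightarrow> complex) \<Rightarrow> (real \<Rightarrow> complex) \<Rightarrow> 'a \<Rightarrow> 'a \<Rightarrow> complex" where
  "expected_kernel m \<Lambda> f g x y =
     (LINT p|PiM {..<m} (\<lambda>_. freq_dither \<Lambda>).
        (\<Sum>j<m. rpf m f p x j * cnj (rpf m g p y j)))"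

end

theory Submission
  imports Defs
begin


lemma cis_meas: "cis \<in> borel_measurable borel"
  by (intro borel_measurable_continuous_onI continuous_intros)
lemma cis_meas'[measurable]: "g \<in> M \<rightarrow>\<^sub>M borel \<Longrightarrow> (\<lambda>x. cis (g x)) \<in> M \<rightarrow>\<^sub>M borel"
  using measurable_compose[OF _ cis_meas] by blast

definition UU :: "real measure" where "UU = uniform_measure lborel {0..<2*pi}"

lemma UU_density: "UU = density lborel (\<lambda>x. ennreal (indicator {0..<2*pi} x / (2*pi)))"
proof -
  have *: "1 / ennreal (2*pi) = ennreal (1 / (2*pi))"
    using divide_ennreal[of 1 "2*pi"] by simp
  show ?thesis
    by (simp only: UU_def uniform_measure_def, intro density_cong) (auto simp: * split: split_indicator)
qed

lemma prob_space_UU: "prob_space UU"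
  unfolding UU_def by (rule prob_space_uniform_measure) auto

lemma sets_UU[simp, measurable_cong]: "sets UU = sets borel" and space_UU[simp]: "space UU = UNIV"
  unfolding UU_def by auto

lemma integral_UU:
  fixes h :: "real \<Rightarrow> complex"
  assumes [measurable]: "h \<in> borel_measurable borel"
  shows "integral\<^sup>L UU h = (LBINT t=0..2*pi. h t) / (2*pi)"
proof -
  have "integral\<^sup>L UU h = LINT x|lborel. (indicator {0..<2*pi} x / (2*pi)) *\<^sub>R h x"
    unfolding UU_density by (rule integral_density) auto
  also have "\<dots> = (LINT x|lborel. indicator {0..<2*pi} x *\<^sub>R h x) / (2*pi)"
    by (simp add: scaleR_conv_of_real divide_simps mult_ac)
  also have "\<dots> = (LBINT t=0..2*pi. h t) / (2*pi)"
    using interval_integral_Ico[of 0 "2*pi" h] by (simp add: set_lebesgue_integral_def zero_ereal_def)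
  finally show ?thesis .
qed

lemma fourier_coeff_UU:
  assumes "f \<in> borel_measurable borel"
  shows "fourier_coeff f k = LINT t|UU. f t * cis (- (of_int k * t))"
proof -
  have [measurable]: "f \<in> borel_measurable borel" by fact
  show ?thesis by (subst integral_UU) (auto simp: fourier_coeff_def)
qed

lemma integral_cis_UU: "(LINT t|UU. cis (of_int n * t)) = (if n = 0 then 1 else 0)"
proof (cases "n = 0")
  case True
  have "prob_space UU" by (rule prob_space_UU)
  then show ?thesis using True by (simp add: prob_space.prob_space[of UU, simplified])
next
  case False
  define F where "F t = cis (of_int n * t) / (\<i> * of_int n)" for t
  have d: "(F has_vector_derivative cis (of_int n * t)) (at t within X)" for t X
    unfolding F_def has_vector_derivative_def
    using False by (auto intro!: derivative_eq_intros ext simp: scaleR_conv_of_real field_simps)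
  have "(LBINT t=0..2*pi. cis (of_int n * t)) = F (2*pi) - F 0"
    using interval_integral_FTC_finite[of 0 "2*pi" "\<lambda>t. cis (of_int n * t)" F] d
    by (simp add: zero_ereal_def continuous_on_cis continuous_intros)
  also have "\<dots> = 0"
    unfolding F_def using cis_multiple_2pi[of "of_int n"] by (simp add: mult_ac)
  finally show ?thesis using False by (subst integral_UU) auto
qed



lemma set_integrable_Ico:
  fixes h :: "real \<Rightarrow> complex"
  assumes [measurable]: "h \<in> borel_measurable borel" and B: "\<And>t. norm (h t) \<le> B"
  shows "set_integrable lborel {a..<b} h"
proof -
  have fin: "emeasure lborel {a..<b} < \<infinity>" by (cases "a \<le> b") (auto simp: emeasure_lborel_Ico)
  have "integrable lborel (\<lambda>x. indicator {a..<b} x * B)"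
    by (intro integrable_mult_left integrable_real_indicator fin) auto
  note int = this
  have "B \<ge> 0" using B[of 0] norm_ge_zero order_trans by blast
  then show ?thesis unfolding set_integrable_def
    by (intro Bochner_Integration.integrable_bound[OF int]) (auto simp: indicator_def B)
qed

lemma set_integral_shift:
  fixes h :: "real \<Rightarrow> complex"
  shows "set_lebesgue_integral lborel {0..<c} (\<lambda>t. h (t + a)) = set_lebesgue_integral lborel {a..<a+c} h"
proof -
  have "set_lebesgue_integral lborel {a..<a+c} h = \<bar>1\<bar> *\<^sub>R (LBINT x. indicator {a..<a+c} (a + 1 * x) *\<^sub>R h (a + 1 * x))"
    unfolding set_lebesgue_integral_def by (rule lborel_integral_real_affine) simp
  also have "\<dots> = (LBINT x. indicator {0..<c} x *\<^sub>R h (x + a))"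
    unfolding abs_one scaleR_one mult_1
    by (intro Bochner_Integration.integral_cong) (auto simp: indicator_def add.commute)
  finally show ?thesis unfolding set_lebesgue_integral_def by simp
qed

lemma periodic_int:
  fixes h :: "real \<Rightarrow> 'b"
  assumes per: "\<And>t. h (t + 2*pi) = h t"
  shows "h (t + 2*pi* of_int n) = h t"
proof -
  have nat: "h (t + 2*pi* of_nat m) = h t" for t m
  proof (induction m arbitrary: t)
    case (Suc m)
    have "h (t + 2*pi* of_nat (Suc m)) = h ((t + 2*pi* of_nat m) + 2*pi)" by (simp add: algebra_simps)
    also have "\<dots> = h t" using per Suc by simp
    finally show ?case .
  qed simp
  show ?thesis
  proof (cases "n \<ge> 0")
    case True then show ?thesis using nat[of t "nat n"] by simp
  next
    case False
    have "h (t + 2*pi* of_int n) = h ((t + 2*pi* of_int n) + 2*pi* of_nat (nat (-n)))"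
      by (rule nat[symmetric])
    also have "(t + 2*pi* of_int n) + 2*pi* of_nat (nat (-n)) = t" using False by (simp add: algebra_simps)
    finally show ?thesis .
  qed
qed

lemma UU_shift:
  fixes h :: "real \<Rightarrow> complex"
  assumes [measurable]: "h \<in> borel_measurable borel" and B: "\<And>t. norm (h t) \<le> B"
    and per: "\<And>t. h (t + 2*pi) = h t"
  shows "(LINT t|UU. h (t + a)) = (LINT t|UU. h t)"
proof -
  define n where "n = \<lfloor>a/(2*pi)\<rfloor>"
  define b where "b = a - 2*pi* of_int n"
  have "of_int n \<le> a/(2*pi)" "a/(2*pi) < of_int n + 1" unfolding n_def by linarith+
  then have b0: "0 \<le> b" and b1: "b < 2*pi" unfolding b_def by (auto simp: field_simps)
  have hb: "h (t + a) = h (t + b)" for t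
    using periodic_int[of h, OF per, of "t+b" n] by (simp add: b_def)
  have I: "set_integrable lborel {x..<y} h" for x y by (rule set_integrable_Ico[OF _ B]) simp
  have "set_lebesgue_integral lborel {0..<2*pi} (\<lambda>t. h (t + b)) = set_lebesgue_integral lborel {b..<b+2*pi} h"
    by (rule set_integral_shift)
  also have "{b..<b+2*pi} = {b..<2*pi} \<union> {2*pi..<2*pi+b}" using b0 b1 by auto
  also have "set_lebesgue_integral lborel \<dots> h = set_lebesgue_integral lborel {b..<2*pi} h + set_lebesgue_integral lborel {2*pi..<2*pi+b} h"
    by (rule set_integral_Un) (auto intro: I)
  also have "set_lebesgue_integral lborel {2*pi..<2*pi+b} h = set_lebesgue_integral lborel {0..<b} (\<lambda>t. h (t + 2*pi))"
    by (rule set_integral_shift[symmetric])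
  also have "\<dots> = set_lebesgue_integral lborel {0..<b} h" using per by simp
  also have "set_lebesgue_integral lborel {b..<2*pi} h + set_lebesgue_integral lborel {0..<b} h
      = set_lebesgue_integral lborel ({0..<b} \<union> {b..<2*pi}) h"
    by (subst set_integral_Un) (auto intro: I)
  also have "{0..<b} \<union> {b..<2*pi} = {0..<2*pi}" using b0 b1 by auto
  finally have *: "set_lebesgue_integral lborel {0..<2*pi} (\<lambda>t. h (t + b)) = set_lebesgue_integral lborel {0..<2*pi} h" .
  show ?thesis
    using * interval_integral_Ico[of 0 "2*pi" h] interval_integral_Ico[of 0 "2*pi" "\<lambda>t. h (t + b)"]
    by (simp add: integral_UU hb zero_ereal_def)
qed



definition trigpoly :: "(real \<Rightarrow> complex) \<Rightarrow> bool" where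
  "trigpoly T \<longleftrightarrow> (\<exists>S b. finite S \<and> (\<forall>t. T t = (\<Sum>k\<in>S. b k * cis (of_int k * t))))"

lemma tp_cis: "trigpoly (\<lambda>t. c * cis (of_int k * t))"
  unfolding trigpoly_def by (rule exI[of _ "{k}"], rule exI[of _ "\<lambda>_. c"]) simp

lemma tp_const: "trigpoly (\<lambda>t. c)"
  using tp_cis[of c 0] by simp

lemma sum_if_subset:
  assumes "finite S'" "S \<subseteq> S'"
  shows "(\<Sum>k\<in>S'. (if k \<in> S then g k else 0)) = (\<Sum>k\<in>S. g k)"
proof -
  have "(\<Sum>k\<in>S'. (if k \<in> S then g k else 0)) = (\<Sum>k\<in>S' \<inter> S. g k)"
    using assms(1) by (simp add: sum.inter_restrict)
  also have "S' \<inter> S = S" using assms(2) by blast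
  finally show ?thesis .
qed

lemma tp_add:
  assumes "trigpoly T1" "trigpoly T2"
  shows "trigpoly (\<lambda>t. T1 t + T2 t)"
proof -
  obtain S1 b1 where 1: "finite S1" "\<And>t. T1 t = (\<Sum>k\<in>S1. b1 k * cis (of_int k * t))"
    using assms(1) unfolding trigpoly_def by blast
  obtain S2 b2 where 2: "finite S2" "\<And>t. T2 t = (\<Sum>k\<in>S2. b2 k * cis (of_int k * t))"
    using assms(2) unfolding trigpoly_def by blast
  define b where "b k = (if k \<in> S1 then b1 k else 0) + (if k \<in> S2 then b2 k else 0)" for k
  have "T1 t + T2 t = (\<Sum>k\<in>S1 \<union> S2. b k * cis (of_int k * t))" for t
  proof -
    have "(\<Sum>k\<in>S1 \<union> S2. b k * cis (of_int k * t)) =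
          (\<Sum>k\<in>S1 \<union> S2. (if k \<in> S1 then b1 k * cis (of_int k * t) else 0)) +
          (\<Sum>k\<in>S1 \<union> S2. (if k \<in> S2 then b2 k * cis (of_int k * t) else 0))"
      unfolding sum.distrib[symmetric] by (rule sum.cong) (auto simp: b_def distrib_right)
    also have "\<dots> = T1 t + T2 t"
      using 1 2 by (simp add: sum_if_subset)
    finally show ?thesis by simp
  qed
  then show ?thesis unfolding trigpoly_def using 1 2 by blast
qed

lemma tp_sum:
  assumes "finite I" "\<And>i. i \<in> I \<Longrightarrow> trigpoly (T i)"
  shows "trigpoly (\<lambda>t. \<Sum>i\<in>I. T i t)"
  using assms
proof (induction I rule: finite_induct)
  case empty then show ?case using tp_const[of 0] by simp
next
  case (insert x F)
  then show ?case using tp_add[of "T x" "\<lambda>t. \<Sum>i\<in>F. T i t"] by simp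
qed

lemma tp_mult:
  assumes "trigpoly T1" "trigpoly T2"
  shows "trigpoly (\<lambda>t. T1 t * T2 t)"
proof -
  obtain S1 b1 where 1: "finite S1" "\<And>t. T1 t = (\<Sum>k\<in>S1. b1 k * cis (of_int k * t))"
    using assms(1) unfolding trigpoly_def by blast
  obtain S2 b2 where 2: "finite S2" "\<And>t. T2 t = (\<Sum>k\<in>S2. b2 k * cis (of_int k * t))"
    using assms(2) unfolding trigpoly_def by blast
  have eq: "T1 t * T2 t = (\<Sum>j\<in>S1. \<Sum>k\<in>S2. (b1 j * b2 k) * cis (of_int (j + k) * t))" for t
    unfolding 1 2 sum_product
    by (intro sum.cong refl) (simp add: cis_mult algebra_simps)
  have "trigpoly (\<lambda>t. \<Sum>j\<in>S1. \<Sum>k\<in>S2. (b1 j * b2 k) * cis (of_int (j + k) * t))"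
    using 1 2 by (intro tp_sum tp_cis) auto
  then show ?thesis unfolding eq .
qed

lemma tp_meas: "trigpoly T \<Longrightarrow> T \<in> borel_measurable borel"
  unfolding trigpoly_def by (auto simp: fun_eq_iff[symmetric])

lemma tp_bdd: "trigpoly T \<Longrightarrow> \<exists>B. \<forall>t. cmod (T t) \<le> B"
proof -
  assume "trigpoly T"
  then obtain S b where 1: "finite S" "\<And>t. T t = (\<Sum>k\<in>S. b k * cis (of_int k * t))"
    unfolding trigpoly_def by blast
  have "cmod (T t) \<le> (\<Sum>k\<in>S. cmod (b k))" for t
    unfolding 1 by (rule order_trans[OF norm_sum]) (simp add: norm_mult)
  then show ?thesis by blast
qed

lemma tp_realpoly:
  fixes p :: "complex \<Rightarrow> real"
  assumes "real_polynomial_function p"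
  shows "trigpoly (\<lambda>t. complex_of_real (p (cis t)))"
  using assms
proof (induction p rule: real_polynomial_function.induct)
  case (linear f)
  interpret bounded_linear f by fact
  have fz: "f z = Re z * f 1 + Im z * f \<i>" for z
  proof -
    have "z = Re z *\<^sub>R 1 + Im z *\<^sub>R \<i>" by (simp add: complex_eq_iff)
    then have "f z = f (Re z *\<^sub>R 1 + Im z *\<^sub>R \<i>)" by simp
    also have "\<dots> = Re z * f 1 + Im z * f \<i>" by (simp add: add scale)
    finally show ?thesis .
  qed
  define a where "a = (complex_of_real (f 1) - \<i> * complex_of_real (f \<i>)) / 2"
  define b where "b = (complex_of_real (f 1) + \<i> * complex_of_real (f \<i>)) / 2"
  have "complex_of_real (f (cis t)) = a * cis (of_int 1 * t) + b * cis (of_int (-1) * t)" for t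
    unfolding fz[of "cis t"] a_def b_def by (simp add: complex_eq_iff algebra_simps add_divide_distrib[symmetric])
  then show ?case using tp_add[OF tp_cis tp_cis] by (simp only: fun_eq_iff[symmetric])
next
  case (const c)
  then show ?case using tp_const by simp
next
  case (add f g)
  then show ?case using tp_add[OF add.IH] by simp
next
  case (mult f g)
  then show ?case using tp_mult[OF mult.IH] by simp
qed

lemma tp_approx_cont:
  fixes \<psi> :: "complex \<Rightarrow> real"
  assumes "continuous_on UNIV \<psi>" "\<eta> > 0"
  obtains T where "trigpoly T" "\<And>t. cmod (complex_of_real (\<psi> (cis t)) - T t) < \<eta>"
proof -
  obtain p where p: "real_polynomial_function p" "\<And>x. x \<in> sphere 0 1 \<Longrightarrow> \<bar>\<psi> x - p x\<bar> < \<eta>"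
    using Stone_Weierstrass_real_polynomial_function[of "sphere 0 1" \<psi> \<eta>] assms
    by (metis compact_sphere continuous_on_subset subset_UNIV)
  have "cmod (complex_of_real (\<psi> (cis t)) - complex_of_real (p (cis t))) < \<eta>" for t
    using p(2)[of "cis t"] by (simp flip: of_real_diff)
  then show ?thesis using that tp_realpoly[OF p(1)] by blast
qed



definition bnd :: "(real \<Rightarrow> complex) \<Rightarrow> bool" where
  "bnd h \<longleftrightarrow> h \<in> borel_measurable borel \<and> (\<exists>B. \<forall>t. cmod (h t) \<le> B)"

definition L2d :: "(real \<Rightarrow> complex) \<Rightarrow> real" where
  "L2d h = (LINT t|UU. (cmod (h t))\<^sup>2)"

definition approx :: "(real \<Rightarrow> complex) \<Rightarrow> bool" where
  "approx h \<longleftrightarrow> (\<forall>e>0. \<exists>T. trigpoly T \<and> L2d (\<lambda>t. h t - T t) < e)"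

lemma fm_UU: "finite_measure UU"
  using prob_space_UU prob_space.finite_measure by blast

lemma integrable_UU_bound:
  fixes f :: "real \<Rightarrow> 'b::{banach, second_countable_topology}"
  assumes "f \<in> borel_measurable borel" "\<And>t. norm (f t) \<le> B"
  shows "integrable UU f"
proof (rule finite_measure.integrable_const_bound[OF fm_UU, of _ B])
  show "f \<in> borel_measurable UU" using assms(1) by (simp only: measurable_cong_sets[OF sets_UU refl])
qed (use assms in auto)

lemma measure_UU_UNIV[simp]: "measure UU UNIV = 1"
  using prob_space.prob_space[OF prob_space_UU] by simp

lemma bnd_tp: "trigpoly T \<Longrightarrow> bnd T"
  unfolding bnd_def using tp_meas tp_bdd by blast

lemma bnd_add: "bnd u \<Longrightarrow> bnd v \<Longrightarrow> bnd (\<lambda>t. u t + v t)"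
  unfolding bnd_def
proof safe
  fix B1 B2 assume "u \<in> borel_measurable borel" "v \<in> borel_measurable borel"
    and b: "\<forall>t. cmod (u t) \<le> B1" "\<forall>t. cmod (v t) \<le> B2"
  then show "(\<lambda>t. u t + v t) \<in> borel_measurable borel" by measurable
  have "cmod (u t + v t) \<le> B1 + B2" for t using b norm_triangle_le add_mono by metis
  then show "\<exists>B. \<forall>t. cmod (u t + v t) \<le> B" by blast
qed

lemma bnd_scale: "bnd u \<Longrightarrow> bnd (\<lambda>t. c * u t)"
  unfolding bnd_def
proof safe
  fix B1 assume "u \<in> borel_measurable borel" and b: "\<forall>t. cmod (u t) \<le> B1"
  then show "(\<lambda>t. c * u t) \<in> borel_measurable borel" by measurable
  have "cmod (c * u t) \<le> cmod c * B1" for t using b by (simp add: norm_mult mult_left_mono)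
  then show "\<exists>B. \<forall>t. cmod (c * u t) \<le> B" by blast
qed

lemma bnd_diff: "bnd u \<Longrightarrow> bnd v \<Longrightarrow> bnd (\<lambda>t. u t - v t)"
  using bnd_add[of u "\<lambda>t. (-1) * v t"] bnd_scale[of v "-1"] by simp

lemma bnd_sum: "finite I \<Longrightarrow> (\<And>i. i \<in> I \<Longrightarrow> bnd (h i)) \<Longrightarrow> bnd (\<lambda>t. \<Sum>i\<in>I. h i t)"
proof (induction I rule: finite_induct)
  case empty then show ?case unfolding bnd_def by auto
next
  case (insert x F) then show ?case using bnd_add[of "h x" "\<lambda>t. \<Sum>i\<in>F. h i t"] by simp
qed

lemma bnd_indicator: "A \<in> sets borel \<Longrightarrow> bnd (\<lambda>t. indicator A t)"
  unfolding bnd_def by (auto intro!: exI[of _ 1] simp: indicator_def)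

lemma sq_bnd: assumes "bnd u" shows "\<exists>B. \<forall>t. norm ((cmod (u t))\<^sup>2) \<le> B"
proof -
  obtain B where "\<forall>t. cmod (u t) \<le> B" using assms unfolding bnd_def by blast
  then have "norm ((cmod (u t))\<^sup>2) \<le> B\<^sup>2" for t by (simp add: power_mono)
  then show ?thesis by blast
qed

lemma int_sq: "bnd u \<Longrightarrow> integrable UU (\<lambda>t. (cmod (u t))\<^sup>2)"
proof -
  assume u: "bnd u"
  then have [measurable]: "u \<in> borel_measurable borel" unfolding bnd_def by blast
  obtain B where "\<forall>t. norm ((cmod (u t))\<^sup>2) \<le> B" using sq_bnd[OF u] by blast
  then show ?thesis by (intro integrable_UU_bound[of _ B]) auto
qed

lemma L2d_nonneg: "L2d u \<ge> 0"
  unfolding L2d_def by (rule integral_nonneg_AE) auto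

lemma sq_tri: "(cmod (a + b))\<^sup>2 \<le> 2 * (cmod a)\<^sup>2 + 2 * (cmod b)\<^sup>2"
proof -
  have "cmod (a + b) \<le> cmod a + cmod b" by (rule norm_triangle_ineq)
  then have "(cmod (a + b))\<^sup>2 \<le> (cmod a + cmod b)\<^sup>2" by (simp add: power_mono)
  also have "\<dots> \<le> 2 * (cmod a)\<^sup>2 + 2 * (cmod b)\<^sup>2"
    using sum_squares_ge_zero[of "cmod a - cmod b" 0] by (simp add: power2_eq_square algebra_simps)
  finally show ?thesis .
qed

lemma L2d_tri:
  assumes "bnd u" "bnd v"
  shows "L2d (\<lambda>t. u t + v t) \<le> 2 * L2d u + 2 * L2d v"
proof -
  have "L2d (\<lambda>t. u t + v t) \<le> (LINT t|UU. 2 * (cmod (u t))\<^sup>2 + 2 * (cmod (v t))\<^sup>2)"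
    unfolding L2d_def
    by (intro integral_mono int_sq bnd_add assms Bochner_Integration.integrable_add integrable_mult_right sq_tri)
  also have "\<dots> = 2 * L2d u + 2 * L2d v"
    unfolding L2d_def using int_sq[OF assms(1)] int_sq[OF assms(2)] by simp
  finally show ?thesis .
qed

lemma L2d_tri':
  assumes "bnd h" "bnd g" "bnd T"
  shows "L2d (\<lambda>t. h t - T t) \<le> 2 * L2d (\<lambda>t. h t - g t) + 2 * L2d (\<lambda>t. g t - T t)"
  using L2d_tri[OF bnd_diff[OF assms(1,2)] bnd_diff[OF assms(2,3)]] by simp

lemma L2d_scale: "L2d (\<lambda>t. c * u t) = (cmod c)\<^sup>2 * L2d u"
  unfolding L2d_def by (simp add: norm_mult power_mult_distrib)

lemma L2d_bound:
  assumes "bnd u" "\<And>t. cmod (u t) \<le> B"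
  shows "L2d u \<le> B\<^sup>2"
proof -
  have "L2d u \<le> (LINT t|UU. B\<^sup>2)"
    unfolding L2d_def using assms(2)
    by (intro integral_mono int_sq assms(1) integrable_UU_bound[of _ "B\<^sup>2"]) (auto intro: power_mono)
  then show ?thesis by simp
qed

lemma approx_add:
  assumes "bnd h1" "bnd h2" "approx h1" "approx h2"
  shows "approx (\<lambda>t. h1 t + h2 t)"
  unfolding approx_def
proof safe
  fix e :: real assume "e > 0"
  then obtain T1 T2 where T: "trigpoly T1" "trigpoly T2"
    and l: "L2d (\<lambda>t. h1 t - T1 t) < e/4" "L2d (\<lambda>t. h2 t - T2 t) < e/4"
    using assms(3,4) unfolding approx_def by (meson divide_pos_pos zero_less_numeral)
  have "L2d (\<lambda>t. (h1 t - T1 t) + (h2 t - T2 t)) \<le> 2 * L2d (\<lambda>t. h1 t - T1 t) + 2 * L2d (\<lambda>t. h2 t - T2 t)"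
    by (intro L2d_tri bnd_diff assms bnd_tp T)
  also have "\<dots> < e" using l by simp
  finally have "L2d (\<lambda>t. h1 t + h2 t - (T1 t + T2 t)) < e" by (simp add: algebra_simps)
  then show "\<exists>T. trigpoly T \<and> L2d (\<lambda>t. h1 t + h2 t - T t) < e"
    using tp_add[OF T] by blast
qed

lemma approx_scale:
  assumes "approx h"
  shows "approx (\<lambda>t. c * h t)"
  unfolding approx_def
proof safe
  fix e :: real assume "e > 0"
  have "(cmod c)\<^sup>2 + 1 > 0" by (simp add: add_nonneg_pos)
  then have "e / ((cmod c)\<^sup>2 + 1) > 0" using \<open>e > 0\<close> by simp
  then obtain T where T: "trigpoly T" and l: "L2d (\<lambda>t. h t - T t) < e / ((cmod c)\<^sup>2 + 1)"
    using assms unfolding approx_def by blast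
  have "L2d (\<lambda>t. c * h t - c * T t) = (cmod c)\<^sup>2 * L2d (\<lambda>t. h t - T t)"
    using L2d_scale[of c "\<lambda>t. h t - T t"] by (simp add: algebra_simps)
  also have "\<dots> \<le> ((cmod c)\<^sup>2 + 1) * L2d (\<lambda>t. h t - T t)"
    using L2d_nonneg by (intro mult_right_mono) auto
  also have "\<dots> < e" using l by (simp add: field_simps add_pos_nonneg)
  finally show "\<exists>T. trigpoly T \<and> L2d (\<lambda>t. c * h t - T t) < e"
    using tp_mult[OF tp_const T] by blast
qed

lemma approx_zero: "approx (\<lambda>t. 0)"
  unfolding approx_def L2d_def using tp_const[of 0] by force

lemma approx_sum:
  assumes "finite I" "\<And>i. i \<in> I \<Longrightarrow> bnd (h i)" "\<And>i. i \<in> I \<Longrightarrow> approx (h i)"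
  shows "approx (\<lambda>t. \<Sum>i\<in>I. h i t)"
  using assms
proof (induction I rule: finite_induct)
  case empty then show ?case using approx_zero by simp
next
  case (insert x F)
  have b1: "bnd (h x)" "approx (h x)" using insert.prems by auto
  have b2: "bnd (\<lambda>t. \<Sum>i\<in>F. h i t)" using insert.prems insert.hyps(1) by (intro bnd_sum) auto
  have a2: "approx (\<lambda>t. \<Sum>i\<in>F. h i t)" using insert.prems by (intro insert.IH) auto
  have "approx (\<lambda>t. h x t + (\<Sum>i\<in>F. h i t))"
    by (rule approx_add[OF b1(1) b2 b1(2) a2])
  then show ?case using insert(1,2) by simp
qed

lemma approx_lim:
  assumes h: "bnd h" and hs: "\<And>n. bnd (hs n)" "\<And>n. approx (hs n)"
    and B: "\<And>n t. cmod (hs n t) \<le> B" "\<And>t. cmod (h t) \<le> B"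
    and lim: "\<And>t. (\<lambda>n. hs n t) \<longlonglongrightarrow> h t"
  shows "approx h"
  unfolding approx_def
proof safe
  fix e :: real assume e: "e > 0"
  have [measurable]: "h \<in> borel_measurable borel" "\<And>n. hs n \<in> borel_measurable borel"
    using h hs unfolding bnd_def by auto
  have "(\<lambda>n. LINT t|UU. (cmod (h t - hs n t))\<^sup>2) \<longlonglongrightarrow> (LINT t|UU. 0)"
  proof (rule integral_dominated_convergence[where w = "\<lambda>t. (2*B)\<^sup>2"])
    show "integrable UU (\<lambda>t. (2*B)\<^sup>2)" by (rule integrable_UU_bound[of _ "(2*B)\<^sup>2"]) auto
    show "AE t in UU. (\<lambda>n. (cmod (h t - hs n t))\<^sup>2) \<longlonglongrightarrow> 0"
    proof (intro AE_I2)
      fix t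
      have "(\<lambda>n. h t - hs n t) \<longlonglongrightarrow> h t - h t" by (intro tendsto_diff tendsto_const lim)
      then have "(\<lambda>n. (cmod (h t - hs n t))\<^sup>2) \<longlonglongrightarrow> (cmod (h t - h t))\<^sup>2" by (intro tendsto_power tendsto_norm)
      then show "(\<lambda>n. (cmod (h t - hs n t))\<^sup>2) \<longlonglongrightarrow> 0" by simp
    qed
    show "AE t in UU. norm ((cmod (h t - hs n t))\<^sup>2) \<le> (2*B)\<^sup>2" for n
    proof (intro AE_I2)
      fix t
      have "cmod (h t - hs n t) \<le> 2*B" using B(1)[of n t] B(2)[of t] norm_triangle_ineq4[of "h t" "hs n t"] by linarith
      then have "(cmod (h t - hs n t))\<^sup>2 \<le> (2*B)\<^sup>2" by (intro power_mono) auto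
      then show "norm ((cmod (h t - hs n t))\<^sup>2) \<le> (2*B)\<^sup>2" by simp
    qed
    show "(\<lambda>t. 0::real) \<in> borel_measurable UU" by simp
    show "(\<lambda>t. (cmod (h t - hs n t))\<^sup>2) \<in> borel_measurable UU" for n
      unfolding measurable_cong_sets[OF sets_UU refl] by measurable
  qed
  then have "(\<lambda>n. L2d (\<lambda>t. h t - hs n t)) \<longlonglongrightarrow> 0" unfolding L2d_def by simp
  then have "eventually (\<lambda>n. L2d (\<lambda>t. h t - hs n t) < e/4) sequentially"
    using e by (intro order_tendstoD(2)) auto
  then obtain N where N: "L2d (\<lambda>t. h t - hs N t) < e/4"
    by (auto simp: eventually_sequentially)
  obtain T where T: "trigpoly T" "L2d (\<lambda>t. hs N t - T t) < e/4"
    using hs(2)[of N] e unfolding approx_def by (meson divide_pos_pos zero_less_numeral)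
  have "L2d (\<lambda>t. h t - T t) \<le> 2 * L2d (\<lambda>t. h t - hs N t) + 2 * L2d (\<lambda>t. hs N t - T t)"
    by (rule L2d_tri'[OF h hs(1) bnd_tp[OF T(1)]])
  also have "\<dots> < e" using N T by simp
  finally show "\<exists>T. trigpoly T \<and> L2d (\<lambda>t. h t - T t) < e" using T by blast
qed



lemma cis_inj_aux:
  assumes "0 < s" "s < 2*pi" "0 \<le> t" "t \<le> 2*pi" "cis s = cis t"
  shows "s = t"
proof -
  have "cis (s - t) = 1" using assms(5) cis_divide[of s t] by simp
  then have "cos (s - t) = 1" by (simp add: complex_eq_iff)
  then obtain n :: int where n: "s - t = of_int n * 2 * pi" using cos_one_2pi_int by blast
  have p: "2*pi > 0" by simp
  have ne: "of_int n * (2*pi) = s - t" using n by (simp add: mult.assoc)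
  have h1: "(-1) * (2*pi) < of_int n * (2*pi)" using assms(1,4) ne by linarith
  have h2: "of_int n * (2*pi) < 1 * (2*pi)" using assms(2,3) ne by linarith
  have "-1 < (of_int n :: real)" using h1 mult_less_cancel_right_pos[OF p, of "-1" "of_int n"] by linarith
  moreover have "of_int n < (1::real)" using h2 mult_less_cancel_right_pos[OF p, of "of_int n" 1] by linarith
  ultimately have "-1 < n" "n < 1" by simp_all
  then have "n = 0" by linarith
  then show ?thesis using n by simp
qed

lemma meas_lt: "emeasure M A < ennreal e \<Longrightarrow> measure M A < e"
  unfolding measure_def
  by (subst enn2real_less_iff) (auto intro: order.strict_trans)

lemma AE_UU_open: "AE t in UU. t \<in> {0<..<2*pi}"
  unfolding UU_def
  by (rule AE_uniform_measureI) (auto intro: eventually_mono[OF AE_lborel_singleton[of 0]])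

lemma approx_ind:
  assumes A: "A \<in> sets borel"
  shows "approx (\<lambda>t. indicator A t)"
proof -
  define A' where "A' = A \<inter> {0<..<2*pi}"
  have A'b[measurable]: "A' \<in> sets borel" unfolding A'_def using A by simp
  have [measurable]: "A \<in> sets borel" by fact
  have L2eq: "L2d (\<lambda>t. indicator A t - T t) = L2d (\<lambda>t. indicator A' t - T t)" if T: "trigpoly T" for T
  proof -
    have [measurable]: "T \<in> borel_measurable borel" using tp_meas[OF T] .
    show ?thesis unfolding L2d_def
    proof (rule integral_cong_AE)
      show "AE t in UU. (cmod (indicator A t - T t))\<^sup>2 = (cmod (indicator A' t - T t))\<^sup>2"
        using AE_UU_open by (rule eventually_mono) (auto simp: A'_def indicator_def)
      show "(\<lambda>t. (cmod (indicator A t - T t))\<^sup>2) \<in> borel_measurable UU"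
        unfolding measurable_cong_sets[OF sets_UU refl] by measurable
      show "(\<lambda>t. (cmod (indicator A' t - T t))\<^sup>2) \<in> borel_measurable UU"
        unfolding measurable_cong_sets[OF sets_UU refl] by measurable
    qed
  qed
  have main: "\<exists>T. trigpoly T \<and> L2d (\<lambda>t. indicator A' t - T t) < e" if e: "e > 0" for e
  proof -
    have e8: "e/8 > 0" using e by simp
    obtain U0 where U0: "open U0" "A' \<subseteq> U0" "emeasure lborel (U0 - A') < ennreal (e/8)"
      using outer_regular_lborel[OF _ e8, of A'] by auto
    have "- A' \<in> sets borel" by simp
    then obtain W where W: "open W" "- A' \<subseteq> W" "emeasure lborel (W - - A') < ennreal (e/8)"
      using outer_regular_lborel[OF _ e8, of "- A'"] by auto
    define V where "V = U0 \<inter> {0<..<2*pi}"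
    define C where "C = - W"
    define D where "D = {0..2*pi} - V"
    have CA: "C \<subseteq> A'" using W(2) unfolding C_def by auto
    have AV: "A' \<subseteq> V" using U0(2) unfolding V_def A'_def by auto
    have oV: "open V" unfolding V_def using U0(1) by auto
    have cC: "compact C"
    proof -
      have "C \<subseteq> {0..2*pi}" using CA unfolding A'_def by auto
      then have "bounded C" by (rule bounded_subset[OF compact_imp_bounded[OF compact_Icc]])
      moreover have "closed C" unfolding C_def using W(1) by auto
      ultimately show ?thesis using compact_eq_bounded_closed by blast
    qed
    have cD: "compact D"
    proof -
      have "D = {0..2*pi} \<inter> - V" unfolding D_def by auto
      moreover have "closed ({0..2*pi} \<inter> - V)" using oV by (intro closed_Int) auto
      moreover have "bounded ({0..2*pi} \<inter> - V)" by (rule bounded_subset[OF compact_imp_bounded[OF compact_Icc]]) auto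
      ultimately show ?thesis using compact_eq_bounded_closed by metis
    qed
    have cK: "closed (cis ` C)"
      by (intro compact_imp_closed compact_continuous_image cC continuous_intros)
    have cL: "closed (cis ` D)"
      by (intro compact_imp_closed compact_continuous_image cD continuous_intros)
    have disj: "cis ` C \<inter> cis ` D = {}"
    proof (rule ccontr)
      assume "cis ` C \<inter> cis ` D \<noteq> {}"
      then obtain s t where st: "s \<in> C" "t \<in> D" "cis s = cis t" by blast
      have "s \<in> {0<..<2*pi}" using st(1) CA unfolding A'_def by auto
      moreover have "t \<in> {0..2*pi}" using st(2) unfolding D_def by auto
      ultimately have "s = t" using cis_inj_aux st(3) by auto
      then show False using st CA AV unfolding D_def by auto
    qed
    obtain \<psi> :: "complex \<Rightarrow> real" where \<psi>: "continuous_on UNIV \<psi>" "\<And>z. \<psi> z \<in> closed_segment 1 0"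
      "\<And>z. z \<in> cis ` C \<Longrightarrow> \<psi> z = 1" "\<And>z. z \<in> cis ` D \<Longrightarrow> \<psi> z = 0"
      using Urysohn[OF cK cL disj, of 1 0] by blast
    have \<psi>01: "0 \<le> \<psi> z" "\<psi> z \<le> 1" for z
      using \<psi>(2)[of z] by (auto simp: closed_segment_commute[of 1 0] closed_segment_eq_real_ivl1)
    define \<phi> where "\<phi> t = complex_of_real (\<psi> (cis t))" for t
    have \<phi>c: "continuous_on UNIV \<phi>" unfolding \<phi>_def
      by (intro continuous_intros continuous_on_compose2[OF \<psi>(1)]) auto
    have \<phi>m[measurable]: "\<phi> \<in> borel_measurable borel"
      using \<phi>c by (rule borel_measurable_continuous_onI)
    have b\<phi>: "bnd \<phi>" unfolding bnd_def using \<psi>01 by (auto simp: \<phi>_def intro!: exI[of _ 1])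
    have bA': "bnd (\<lambda>t. indicator A' t)" by (rule bnd_indicator) simp
    have VCb[measurable]: "V - C \<in> sets borel" using oV W(1) unfolding C_def by auto
    have pw: "(cmod (indicator A' t - \<phi> t))\<^sup>2 \<le> indicator (V - C) t" if t: "t \<in> {0<..<2*pi}" for t
    proof (cases "t \<in> C")
      case True
      then have "t \<in> A'" using CA by auto
      moreover have "\<phi> t = 1" using True \<psi>(3) unfolding \<phi>_def by auto
      ultimately show ?thesis by simp
    next
      case nC: False
      show ?thesis
      proof (cases "t \<in> V")
        case False
        then have "t \<in> D" using t unfolding D_def by auto
        then have "\<phi> t = 0" using \<psi>(4) unfolding \<phi>_def by auto
        moreover have "t \<notin> A'" using False AV by auto
        ultimately show ?thesis by simp
      next
        case True
        have "indicator A' t - \<phi> t = complex_of_real (indicator A' t - \<psi> (cis t))"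
          unfolding \<phi>_def by (simp add: indicator_def)
        moreover have "\<bar>indicator A' t - \<psi> (cis t)\<bar> \<le> (1::real)"
          using \<psi>01[of "cis t"] by (cases "t \<in> A'") auto
        ultimately have "cmod (indicator A' t - \<phi> t) \<le> 1" by (metis norm_of_real)
        then have "(cmod (indicator A' t - \<phi> t))\<^sup>2 \<le> 1"
          by (simp add: power_le_one)
        then show ?thesis using True nC by simp
      qed
    qed
    have "L2d (\<lambda>t. indicator A' t - \<phi> t) \<le> (LINT t|UU. indicator (V - C) t)"
      unfolding L2d_def
    proof (rule integral_mono_AE)
      show "integrable UU (\<lambda>t. (cmod (indicator A' t - \<phi> t))\<^sup>2)"
        by (intro int_sq bnd_diff bA' b\<phi>)
      show "integrable UU (indicat_real (V - C))"
        by (rule integrable_UU_bound[of _ 1]) (auto simp: indicator_def)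
      show "AE t in UU. (cmod (indicator A' t - \<phi> t))\<^sup>2 \<le> indicat_real (V - C) t"
        using AE_UU_open by (rule eventually_mono) (rule pw)
    qed
    also have "\<dots> = measure UU (V - C)" by simp
    finally have L0: "L2d (\<lambda>t. indicator A' t - \<phi> t) \<le> measure UU (V - C)" .
    have M1: "measure UU (V - C) = measure lborel (V - C) / (2*pi)"
    proof -
      have "measure UU (V - C) = measure lborel ({0..<2*pi} \<inter> (V - C)) / measure lborel {0..<2*pi}"
        unfolding UU_def by (rule measure_uniform_measure) auto
      also have "{0..<2*pi} \<inter> (V - C) = V - C" unfolding V_def by auto
      finally show ?thesis by simp
    qed
    have M2: "measure lborel (V - C) / (2*pi) \<le> measure lborel (V - C)"
      using divide_left_mono[of 1 "2*pi" "measure lborel (V - C)"] pi_gt3 by simp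
    have fa: "emeasure lborel (U0 - A') < \<top>" using order.strict_trans[OF U0(3) ennreal_less_top] .
    have fb: "emeasure lborel (W - - A') < \<top>" using order.strict_trans[OF W(3) ennreal_less_top] .
    have M3: "measure lborel (V - C) \<le> measure lborel ((U0 - A') \<union> (W - - A'))"
    proof (rule measure_mono_fmeasurable)
      show "V - C \<subseteq> (U0 - A') \<union> (W - - A')" unfolding V_def C_def by auto
      show "V - C \<in> sets lborel" by simp
      have "emeasure lborel ((U0 - A') \<union> (W - - A')) \<le> emeasure lborel (U0 - A') + emeasure lborel (W - - A')"
        using U0(1) W(1) by (intro emeasure_subadditive) auto
      also have "\<dots> < \<top>" using fa fb by (simp add: ennreal_add_less_top)
      finally show "(U0 - A') \<union> (W - - A') \<in> fmeasurable lborel"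
        using U0(1) W(1) unfolding fmeasurable_def by auto
    qed
    have M4: "measure lborel ((U0 - A') \<union> (W - - A')) \<le> measure lborel (U0 - A') + measure lborel (W - - A')"
      using U0(1) W(1) fa fb by (intro measure_subadditive) auto
    have M5: "measure lborel (U0 - A') < e/8" "measure lborel (W - - A') < e/8"
      using meas_lt[OF U0(3)] meas_lt[OF W(3)] by auto
    have L1: "L2d (\<lambda>t. indicator A' t - \<phi> t) < e/4"
      using L0 M1 M2 M3 M4 M5 by linarith
    define \<eta> where "\<eta> = min 1 (e/8)"
    have \<eta>: "\<eta> > 0" "\<eta> \<le> 1" "\<eta> \<le> e/8" unfolding \<eta>_def using e by auto
    obtain T where T: "trigpoly T" "\<And>t. cmod (complex_of_real (\<psi> (cis t)) - T t) < \<eta>"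
      using tp_approx_cont[OF \<psi>(1) \<eta>(1)] by blast
    have "cmod (\<phi> t - T t) \<le> \<eta>" for t using T(2)[of t] unfolding \<phi>_def by simp
    then have "L2d (\<lambda>t. \<phi> t - T t) \<le> \<eta>\<^sup>2"
      by (intro L2d_bound bnd_diff b\<phi> bnd_tp T(1))
    also have "\<dots> \<le> \<eta>" using \<eta> by (simp add: power2_eq_square mult_left_le_one_le)
    finally have L2: "L2d (\<lambda>t. \<phi> t - T t) \<le> e/8" using \<eta> by simp
    have "L2d (\<lambda>t. indicator A' t - T t) \<le> 2 * L2d (\<lambda>t. indicator A' t - \<phi> t) + 2 * L2d (\<lambda>t. \<phi> t - T t)"
      by (rule L2d_tri'[OF bA' b\<phi> bnd_tp[OF T(1)]])
    also have "\<dots> < e" using L1 L2 e by simp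
    finally show ?thesis using T by blast
  qed
  show ?thesis unfolding approx_def
  proof (intro allI impI)
    fix e :: real assume "e > 0"
    then obtain T where T: "trigpoly T" "L2d (\<lambda>t. indicator A' t - T t) < e" using main by blast
    then show "\<exists>T. trigpoly T \<and> L2d (\<lambda>t. indicator A t - T t) < e"
      by (intro exI[of _ T]) (simp add: L2eq)
  qed
qed

lemma approx_bnd:
  assumes "bnd h"
  shows "approx h"
proof -
  obtain B where B: "\<And>t. cmod (h t) \<le> B" and [measurable]: "h \<in> borel_measurable borel"
    using assms unfolding bnd_def by blast
  obtain F where F: "\<And>i. simple_function borel (F i)" "\<And>x. (\<lambda>i. F i x) \<longlonglongrightarrow> h x"
    "\<And>i x. dist (F i x) 0 \<le> 2 * dist (h x) 0"
    using borel_measurable_implies_sequence_metric[of h borel 0] by auto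
  have FB: "cmod (F i x) \<le> 2 * B" for i x using F(3)[of i x] B[of x] by simp
  have Fm: "F i \<in> borel_measurable borel" for i using F(1) by (rule borel_measurable_simple_function)
  have bF: "bnd (F i)" for i unfolding bnd_def using Fm FB by blast
  have aF: "approx (F i)" for i
  proof -
    have fin: "finite (F i ` UNIV)" using simple_functionD(1)[OF F(1)[of i]] by simp
    have eq: "F i = (\<lambda>x. \<Sum>y\<in>F i ` UNIV. y * indicator (F i -` {y}) x)"
    proof
      fix x
      have "(\<Sum>y\<in>F i ` UNIV. y * indicator (F i -` {y}) x) = (\<Sum>y\<in>F i ` UNIV. if y = F i x then F i x else 0)"
        by (rule sum.cong) (auto simp: indicator_def)
      also have "\<dots> = F i x" using fin by (simp add: sum.delta)
      finally show "F i x = (\<Sum>y\<in>F i ` UNIV. y * indicator (F i -` {y}) x)" by simp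
    qed
    have sets: "F i -` {y} \<in> sets borel" for y using simple_functionD(2)[OF F(1)[of i], of "{y}"] by simp
    have "approx (\<lambda>x. \<Sum>y\<in>F i ` UNIV. y * indicator (F i -` {y}) x)"
    proof (rule approx_sum[OF fin])
      fix y
      show "bnd (\<lambda>x. y * indicator (F i -` {y}) x)" by (rule bnd_scale[OF bnd_indicator[OF sets]])
      show "approx (\<lambda>x. y * indicator (F i -` {y}) x)" by (rule approx_scale[OF approx_ind[OF sets]])
    qed
    then show ?thesis by (subst eq, assumption)
  qed
  have "B \<ge> 0" using B[of 0] norm_ge_zero order_trans by blast
  then have B2: "cmod (h t) \<le> 2*B" for t using B[of t] by linarith
  show ?thesis by (rule approx_lim[OF assms bF aF, where B="2*B"]) (use FB B2 F(2) in auto)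
qed



definition FC :: "(real \<Rightarrow> complex) \<Rightarrow> int \<Rightarrow> complex" where
  "FC h k = (LINT t|UU. h t * cis (- (of_int k * t)))"

definition IP :: "(real \<Rightarrow> complex) \<Rightarrow> (real \<Rightarrow> complex) \<Rightarrow> complex" where
  "IP u v = (LINT t|UU. u t * cnj (v t))"

lemma cnj_meas: "cnj \<in> borel_measurable borel"
  by (intro borel_measurable_continuous_onI continuous_intros)
lemma cnj_meas'[measurable]: "g \<in> M \<rightarrow>\<^sub>M borel \<Longrightarrow> (\<lambda>x. cnj (g x)) \<in> M \<rightarrow>\<^sub>M borel"
  using measurable_compose[OF _ cnj_meas] by blast

lemma bnd_mult: "bnd u \<Longrightarrow> bnd v \<Longrightarrow> bnd (\<lambda>t. u t * v t)"
  unfolding bnd_def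
proof safe
  fix B1 B2 assume [measurable]: "u \<in> borel_measurable borel" "v \<in> borel_measurable borel"
    and b: "\<forall>t. cmod (u t) \<le> B1" "\<forall>t. cmod (v t) \<le> B2"
  show "(\<lambda>t. u t * v t) \<in> borel_measurable borel" by measurable
  have "cmod (u t * v t) \<le> B1 * B2" for t
    unfolding norm_mult using b by (intro mult_mono) (auto intro: order_trans[OF norm_ge_zero])
  then show "\<exists>B. \<forall>t. cmod (u t * v t) \<le> B" by blast
qed

lemma bnd_cnj: "bnd u \<Longrightarrow> bnd (\<lambda>t. cnj (u t))"
  unfolding bnd_def by auto

lemma bnd_cis: "bnd (\<lambda>t. cis (c * t))"
  unfolding bnd_def by auto
lemma bnd_cisn: "bnd (\<lambda>t. cis (- (c * t)))"
  unfolding bnd_def by auto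

lemma bnd_integrable: "bnd u \<Longrightarrow> integrable UU u"
  unfolding bnd_def using integrable_UU_bound by blast

lemma int_prod: "bnd u \<Longrightarrow> bnd v \<Longrightarrow> integrable UU (\<lambda>t. u t * cnj (v t))"
  by (intro bnd_integrable bnd_mult bnd_cnj)

lemma L2d_IP: "complex_of_real (L2d u) = IP u u"
  unfolding L2d_def IP_def integral_complex_of_real[symmetric] complex_norm_square ..

lemma IP_sum_right:
  assumes "bnd h" "finite S"
  shows "IP h (\<lambda>t. \<Sum>k\<in>S. b k * cis (of_int k * t)) = (\<Sum>k\<in>S. cnj (b k) * FC h k)"
proof -
  have "IP h (\<lambda>t. \<Sum>k\<in>S. b k * cis (of_int k * t)) = (LINT t|UU. (\<Sum>k\<in>S. cnj (b k) * (h t * cis (- (of_int k * t)))))"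
    unfolding IP_def by (intro Bochner_Integration.integral_cong) (auto simp: sum_distrib_left cis_cnj mult_ac)
  also have "\<dots> = (\<Sum>k\<in>S. cnj (b k) * FC h k)"
    unfolding FC_def
    by (subst Bochner_Integration.integral_sum) (auto intro!: bnd_integrable bnd_mult bnd_scale bnd_cisn assms simp: integral_mult_right_zero)
  finally show ?thesis .
qed

lemma IP_sum_left:
  assumes "bnd g" "finite S"
  shows "IP (\<lambda>t. \<Sum>k\<in>S. b k * cis (of_int k * t)) g = (\<Sum>k\<in>S. b k * cnj (FC g k))"
proof -
  have "IP (\<lambda>t. \<Sum>k\<in>S. b k * cis (of_int k * t)) g = (LINT t|UU. (\<Sum>k\<in>S. b k * cnj (g t * cis (- (of_int k * t)))))"
    unfolding IP_def by (intro Bochner_Integration.integral_cong) (auto simp: sum_distrib_right sum_distrib_left cis_cnj mult_ac)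
  also have "\<dots> = (\<Sum>k\<in>S. b k * cnj (FC g k))"
    unfolding FC_def
    by (subst Bochner_Integration.integral_sum) (auto intro!: bnd_integrable bnd_mult bnd_scale bnd_cnj bnd_cisn assms simp: integral_mult_right_zero Bochner_Integration.integral_cnj[symmetric])
  finally show ?thesis .
qed

lemma FC_cis: "FC (\<lambda>t. cis (of_int j * t)) k = (if j = k then 1 else 0)"
proof -
  have "FC (\<lambda>t. cis (of_int j * t)) k = (LINT t|UU. cis (of_int (j - k) * t))"
    unfolding FC_def by (simp add: cis_mult algebra_simps)
  then show ?thesis using integral_cis_UU[of "j - k"] by simp
qed

lemma FC_tp:
  assumes "finite S"
  shows "FC (\<lambda>t. \<Sum>j\<in>S. b j * cis (of_int j * t)) k = (if k \<in> S then b k else 0)"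
proof -
  have "FC (\<lambda>t. \<Sum>j\<in>S. b j * cis (of_int j * t)) k = (LINT t|UU. (\<Sum>j\<in>S. b j * (cis (of_int j * t) * cis (- (of_int k * t)))))"
    unfolding FC_def by (intro Bochner_Integration.integral_cong) (auto simp: sum_distrib_right mult.assoc)
  also have "\<dots> = (\<Sum>j\<in>S. b j * FC (\<lambda>t. cis (of_int j * t)) k)"
    unfolding FC_def
    by (subst Bochner_Integration.integral_sum) (auto intro!: bnd_integrable bnd_mult bnd_scale bnd_cis bnd_cisn assms simp: integral_mult_right_zero)
  also have "\<dots> = (if k \<in> S then b k else 0)"
    unfolding FC_cis using assms by (simp add: if_distrib sum.delta' cong: if_cong)
  finally show ?thesis .
qed

lemma IP_PP:
  assumes "finite S"
  shows "IP (\<lambda>t. \<Sum>k\<in>S. b k * cis (of_int k * t)) (\<lambda>t. \<Sum>k\<in>S. b k * cis (of_int k * t)) = (\<Sum>k\<in>S. b k * cnj (b k))"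
  using assms
  by (subst IP_sum_left) (auto intro!: bnd_sum bnd_mult bnd_cis simp: FC_tp bnd_def[of "\<lambda>_. _"] intro: bnd_tp tp_const)

lemma bnd_tpsum: "finite S \<Longrightarrow> bnd (\<lambda>t. \<Sum>k\<in>S. b k * cis (of_int k * t))"
  by (intro bnd_sum bnd_scale bnd_cis)

lemma IP_diff_left: "bnd u \<Longrightarrow> bnd v \<Longrightarrow> bnd w \<Longrightarrow> IP (\<lambda>t. u t - v t) w = IP u w - IP v w"
  unfolding IP_def by (simp add: left_diff_distrib Bochner_Integration.integral_diff int_prod)

lemma IP_diff_right: "bnd u \<Longrightarrow> bnd v \<Longrightarrow> bnd w \<Longrightarrow> IP w (\<lambda>t. u t - v t) = IP w u - IP w v"
  unfolding IP_def by (simp add: right_diff_distrib Bochner_Integration.integral_diff int_prod)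

lemma proj_id:
  assumes h: "bnd h" and S: "finite S"
  shows "L2d (\<lambda>t. h t - (\<Sum>k\<in>S. b k * cis (of_int k * t))) =
         L2d h - (\<Sum>k\<in>S. (cmod (FC h k))\<^sup>2) + (\<Sum>k\<in>S. (cmod (FC h k - b k))\<^sup>2)"
proof -
  define P where "P t = (\<Sum>k\<in>S. b k * cis (of_int k * t))" for t
  have bP: "bnd P" unfolding P_def using S by (rule bnd_tpsum)
  have hP: "bnd (\<lambda>t. h t - P t)" by (rule bnd_diff[OF h bP])
  have "complex_of_real (L2d (\<lambda>t. h t - P t)) = IP (\<lambda>t. h t - P t) (\<lambda>t. h t - P t)" by (rule L2d_IP)
  also have "\<dots> = IP h h - IP h P - (IP P h - IP P P)"
    by (simp add: IP_diff_left IP_diff_right h bP hP)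
  also have "\<dots> = complex_of_real (L2d h) - (\<Sum>k\<in>S. cnj (b k) * FC h k) - (\<Sum>k\<in>S. b k * cnj (FC h k)) + (\<Sum>k\<in>S. b k * cnj (b k))"
    unfolding P_def L2d_IP using IP_sum_right[OF h S] IP_sum_left[OF h S] IP_PP[OF S] by simp
  also have "\<dots> = complex_of_real (L2d h - (\<Sum>k\<in>S. (cmod (FC h k))\<^sup>2) + (\<Sum>k\<in>S. (cmod (FC h k - b k))\<^sup>2))"
  proof -
    have e1: "complex_of_real (\<Sum>k\<in>S. (cmod (FC h k))\<^sup>2) = (\<Sum>k\<in>S. FC h k * cnj (FC h k))"
      by (simp only: of_real_sum complex_norm_square)
    have e2: "complex_of_real (\<Sum>k\<in>S. (cmod (FC h k - b k))\<^sup>2) = (\<Sum>k\<in>S. (FC h k - b k) * cnj (FC h k - b k))"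
      by (simp only: of_real_sum complex_norm_square)
    have e3: "(\<Sum>k\<in>S. (FC h k - b k) * cnj (FC h k - b k)) = (\<Sum>k\<in>S. FC h k * cnj (FC h k)) - (\<Sum>k\<in>S. cnj (b k) * FC h k) - (\<Sum>k\<in>S. b k * cnj (FC h k)) + (\<Sum>k\<in>S. b k * cnj (b k))"
      by (simp add: sum_subtractf sum.distrib[symmetric] algebra_simps)
    show ?thesis unfolding of_real_add of_real_diff e1 e2 e3 by simp
  qed
  finally show ?thesis unfolding P_def of_real_eq_iff .
qed

lemma bessel:
  assumes "bnd h" "finite S"
  shows "(\<Sum>k\<in>S. (cmod (FC h k))\<^sup>2) \<le> L2d h"
  using proj_id[OF assms, of "FC h"] L2d_nonneg[of "\<lambda>t. h t - (\<Sum>k\<in>S. FC h k * cis (of_int k * t))"] by simp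

lemma parseval_conv:
  assumes h: "bnd h" and e: "e > 0"
  shows "\<exists>S0. finite S0 \<and> (\<forall>S. finite S \<longrightarrow> S0 \<subseteq> S \<longrightarrow> L2d h - (\<Sum>k\<in>S. (cmod (FC h k))\<^sup>2) < e)"
proof -
  obtain T where T: "trigpoly T" "L2d (\<lambda>t. h t - T t) < e"
    using approx_bnd[OF h] e unfolding approx_def by blast
  obtain S0 b where S0: "finite S0" "\<And>t. T t = (\<Sum>k\<in>S0. b k * cis (of_int k * t))"
    using T(1) unfolding trigpoly_def by blast
  have "L2d h - (\<Sum>k\<in>S. (cmod (FC h k))\<^sup>2) < e" if S: "finite S" "S0 \<subseteq> S" for S
  proof -
    define b' where "b' k = (if k \<in> S0 then b k else 0)" for k
    have "T t = (\<Sum>k\<in>S. b' k * cis (of_int k * t))" for t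
    proof -
      have "(\<Sum>k\<in>S. b' k * cis (of_int k * t)) = (\<Sum>k\<in>S. if k \<in> S0 then b k * cis (of_int k * t) else 0)"
        by (rule sum.cong) (auto simp: b'_def)
      also have "\<dots> = (\<Sum>k\<in>S0. b k * cis (of_int k * t))" by (rule sum_if_subset[OF S])
      finally show ?thesis using S0(2) by simp
    qed
    then have "L2d (\<lambda>t. h t - T t) = L2d h - (\<Sum>k\<in>S. (cmod (FC h k))\<^sup>2) + (\<Sum>k\<in>S. (cmod (FC h k - b' k))\<^sup>2)"
      using proj_id[OF h S(1), of b'] by simp
    moreover have "(\<Sum>k\<in>S. (cmod (FC h k - b' k))\<^sup>2) \<ge> 0" by (intro sum_nonneg) auto
    ultimately show ?thesis using T(2) by linarith
  qed
  then show ?thesis using S0(1) by blast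
qed

lemma amgm_aux:
  fixes x \<eta> :: real
  assumes "\<eta> > 0" "x \<ge> 0"
  shows "x \<le> x\<^sup>2 / (2*\<eta>) + \<eta>/2"
proof -
  have "0 \<le> (x - \<eta>)\<^sup>2" by simp
  then have "2*\<eta>*x \<le> x\<^sup>2 + \<eta>\<^sup>2" by (simp add: power2_eq_square algebra_simps)
  then show ?thesis using assms by (simp add: field_simps power2_eq_square)
qed

lemma IP_bound:
  assumes u: "bnd u" and g: "bnd g" "\<And>t. cmod (g t) \<le> 1" and \<eta>: "\<eta> > 0"
  shows "cmod (IP u g) \<le> L2d u / (2*\<eta>) + \<eta>/2"
proof -
  have "cmod (IP u g) \<le> (LINT t|UU. cmod (u t * cnj (g t)))"
    unfolding IP_def by (rule integral_norm_bound)
  also have "\<dots> \<le> (LINT t|UU. (cmod (u t))\<^sup>2 / (2*\<eta>) + \<eta>/2)"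
  proof (rule integral_mono)
    show "integrable UU (\<lambda>t. cmod (u t * cnj (g t)))"
      using int_prod[OF u g(1)] by (rule integrable_norm)
    show "integrable UU (\<lambda>t. (cmod (u t))\<^sup>2 / (2*\<eta>) + \<eta>/2)"
      using int_sq[OF u] by (intro Bochner_Integration.integrable_add integrable_divide) (auto intro: integrable_UU_bound)
    fix t
    have "cmod (u t * cnj (g t)) \<le> cmod (u t)"
      using g(2)[of t] by (simp add: norm_mult mult_left_le)
    also have "\<dots> \<le> (cmod (u t))\<^sup>2 / (2*\<eta>) + \<eta>/2" by (rule amgm_aux[OF \<eta>]) simp
    finally show "cmod (u t * cnj (g t)) \<le> (cmod (u t))\<^sup>2 / (2*\<eta>) + \<eta>/2" .
  qed
  also have "\<dots> = (LINT t|UU. (cmod (u t))\<^sup>2 / (2*\<eta>)) + (LINT t|UU. \<eta>/2)"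
    by (rule Bochner_Integration.integral_add) (auto intro: integrable_divide int_sq[OF u] finite_measure.integrable_const[OF fm_UU])
  also have "\<dots> = L2d u / (2*\<eta>) + \<eta>/2"
    unfolding L2d_def by simp
  finally show ?thesis .
qed



definition per :: "(real \<Rightarrow> complex) \<Rightarrow> bool" where
  "per h \<longleftrightarrow> (\<forall>t. h (t + 2*pi) = h t)"

lemma bnd_shift: "bnd f \<Longrightarrow> bnd (\<lambda>t. f (t + u))"
  unfolding bnd_def by auto

lemma bnd_UU_shift:
  assumes "bnd h" "per h"
  shows "(LINT t|UU. h (t + a)) = (LINT t|UU. h t)"
proof -
  obtain B where "h \<in> borel_measurable borel" "\<And>t. cmod (h t) \<le> B" using assms(1) unfolding bnd_def by blast
  then show ?thesis using UU_shift[of h B] assms(2) unfolding per_def by blast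
qed

lemma per_mult: "per u \<Longrightarrow> per v \<Longrightarrow> per (\<lambda>t. u t * v t)"
  unfolding per_def by simp

lemma per_cnj: "per u \<Longrightarrow> per (\<lambda>t. cnj (u t))"
  unfolding per_def by simp

lemma per_cisn: "per (\<lambda>t. cis (- (of_int k * t)))"
proof -
  have "cis (- (of_int k * (t + 2*pi))) = cis (- (of_int k * t))" for t
  proof -
    have "cis (- (of_int k * (t + 2*pi))) = cis (- (of_int k * t)) * cis (2 * pi * of_int (-k))"
      by (simp add: cis_mult algebra_simps)
    also have "cis (2 * pi * of_int (-k)) = 1" by (rule cis_multiple_2pi) simp
    finally show ?thesis by simp
  qed
  then show ?thesis unfolding per_def by blast
qed

lemma FC_shift:
  assumes f: "bnd f" "per f"
  shows "FC (\<lambda>t. f (t + u)) k = cis (of_int k * u) * FC f k"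
proof -
  define H where "H s = f s * cis (- (of_int k * s))" for s
  have bH: "bnd H" unfolding H_def by (intro bnd_mult f bnd_cisn)
  have pH: "per H" unfolding H_def by (intro per_mult f per_cisn)
  have "FC (\<lambda>t. f (t + u)) k = (LINT t|UU. cis (of_int k * u) * H (t + u))"
    unfolding FC_def H_def by (intro Bochner_Integration.integral_cong) (auto simp: cis_mult algebra_simps)
  also have "\<dots> = cis (of_int k * u) * (LINT t|UU. H t)"
    by (simp add: integral_mult_right_zero bnd_UU_shift[OF bH pH])
  finally show ?thesis unfolding H_def FC_def .
qed

lemma L2d_shift:
  assumes f: "bnd f" "per f"
  shows "L2d (\<lambda>t. f (t + u)) = L2d f"
proof -
  have "complex_of_real (L2d (\<lambda>t. f (t + u))) = (LINT t|UU. (\<lambda>s. f s * cnj (f s)) (t + u))"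
    unfolding L2d_IP IP_def by simp
  also have "\<dots> = (LINT t|UU. f t * cnj (f t))"
    by (intro bnd_UU_shift bnd_mult bnd_cnj per_mult per_cnj f)
  also have "\<dots> = complex_of_real (L2d f)" unfolding L2d_IP IP_def ..
  finally show ?thesis by simp
qed

lemma corr_approx:
  assumes f: "bnd f" "per f" and g: "bnd g" "\<And>t. cmod (g t) \<le> 1" and e: "e > 0"
  shows "\<exists>S0. finite S0 \<and> (\<forall>S. finite S \<longrightarrow> S0 \<subseteq> S \<longrightarrow>
           (\<forall>u. cmod (IP (\<lambda>t. f (t + u)) g - (\<Sum>k\<in>S. FC f k * cnj (FC g k) * cis (of_int k * u))) < e))"
proof -
  define \<eta> where "\<eta> = e/2"
  have \<eta>: "\<eta> > 0" unfolding \<eta>_def using e by simp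
  obtain S0 where S0: "finite S0" "\<And>S. finite S \<Longrightarrow> S0 \<subseteq> S \<Longrightarrow> L2d f - (\<Sum>k\<in>S. (cmod (FC f k))\<^sup>2) < \<eta>\<^sup>2"
    using parseval_conv[OF f(1), of "\<eta>\<^sup>2"] \<eta> by auto
  have "cmod (IP (\<lambda>t. f (t + u)) g - (\<Sum>k\<in>S. FC f k * cnj (FC g k) * cis (of_int k * u))) < e"
    if S: "finite S" "S0 \<subseteq> S" for S u
  proof -
    define fu where "fu = (\<lambda>t. f (t + u))"
    have bfu: "bnd fu" unfolding fu_def by (rule bnd_shift[OF f(1)])
    have FCu: "FC fu k = cis (of_int k * u) * FC f k" for k unfolding fu_def by (rule FC_shift[OF f])
    define P where "P t = (\<Sum>k\<in>S. FC fu k * cis (of_int k * t))" for t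
    have bP: "bnd P" unfolding P_def using S(1) by (rule bnd_tpsum)
    have "IP P g = (\<Sum>k\<in>S. FC fu k * cnj (FC g k))" unfolding P_def by (rule IP_sum_left[OF g(1) S(1)])
    also have "\<dots> = (\<Sum>k\<in>S. FC f k * cnj (FC g k) * cis (of_int k * u))" unfolding FCu by (simp add: mult_ac)
    finally have IPP: "IP P g = (\<Sum>k\<in>S. FC f k * cnj (FC g k) * cis (of_int k * u))" .
    have "L2d (\<lambda>t. fu t - P t) = L2d fu - (\<Sum>k\<in>S. (cmod (FC fu k))\<^sup>2) + (\<Sum>k\<in>S. (cmod (FC fu k - FC fu k))\<^sup>2)"
      unfolding P_def by (rule proj_id[OF bfu S(1)])
    also have "\<dots> = L2d f - (\<Sum>k\<in>S. (cmod (FC f k))\<^sup>2)"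
      unfolding FCu using L2d_shift[OF f, of u] by (simp add: fu_def norm_mult)
    finally have L: "L2d (\<lambda>t. fu t - P t) < \<eta>\<^sup>2" using S0(2)[OF S] by simp
    have "cmod (IP (\<lambda>t. fu t - P t) g) \<le> L2d (\<lambda>t. fu t - P t) / (2*\<eta>) + \<eta>/2"
      by (rule IP_bound[OF bnd_diff[OF bfu bP] g \<eta>])
    also have "\<dots> < \<eta>\<^sup>2 / (2*\<eta>) + \<eta>/2" using L \<eta> by (simp add: divide_strict_right_mono)
    also have "\<dots> = e/2" using \<eta> unfolding \<eta>_def by (simp add: power2_eq_square field_simps)
    also have "\<dots> < e" using e by simp
    finally have "cmod (IP (\<lambda>t. fu t - P t) g) < e" .
    moreover have "IP (\<lambda>t. fu t - P t) g = IP fu g - IP P g" by (rule IP_diff_left[OF bfu bP g(1)])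
    ultimately show ?thesis unfolding IPP fu_def by simp
  qed
  then show ?thesis using S0(1) by blast
qed



lemma per_shift: "per f \<Longrightarrow> per (\<lambda>t. f (t + a))"
  unfolding per_def by (metis add.commute add.left_commute)

lemma prob_norm_bound:
  fixes h :: "'b \<Rightarrow> complex"
  assumes P: "prob_space M" and h: "integrable M h" and B: "\<And>w. w \<in> space M \<Longrightarrow> cmod (h w) \<le> B"
  shows "cmod (integral\<^sup>L M h) \<le> B"
proof -
  have "cmod (integral\<^sup>L M h) \<le> (LINT w|M. cmod (h w))" by (rule integral_norm_bound)
  also have "\<dots> \<le> (LINT w|M. B)"
    by (rule integral_mono) (auto intro: integrable_norm h finite_measure.integrable_const[OF prob_space.finite_measure[OF P]] B)
  also have "\<dots> = B" using prob_space.prob_space[OF P] by simp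
  finally show ?thesis .
qed

lemma IP_le1:
  assumes "bnd a" "bnd b" "\<And>t. cmod (a t) \<le> 1" "\<And>t. cmod (b t) \<le> 1"
  shows "cmod (IP a b) \<le> 1"
  unfolding IP_def
proof (rule prob_norm_bound[OF prob_space_UU])
  show "integrable UU (\<lambda>t. a t * cnj (b t))" by (rule int_prod[OF assms(1,2)])
  fix t show "cmod (a t * cnj (b t)) \<le> 1"
    using assms(3,4)[of t] by (simp add: norm_mult mult_le_one)
qed

theorem proposition3:
  fixes \<Lambda> :: "'a::euclidean_space measure"
    and f g :: "real \<Rightarrow> complex" and m :: nat and x y :: 'a
  assumes "prob_space \<Lambda>" and "sets \<Lambda> = sets borel"
    and "f \<in> PF" and "g \<in> PF" and "m \<ge> 1"
  shows "((\<lambda>k::int. fourier_coeff f k * cnj (fourier_coeff g k) * kernel_of \<Lambda> (of_int k *\<^sub>R (x - y)))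
            has_sum expected_kernel m \<Lambda> f g x y) UNIV \<and>
           norm (expected_kernel m \<Lambda> f g x y) \<le> 1"
proof -
  note LP = assms(1)
  have fm[measurable]: "f \<in> borel_measurable borel" and pf0: "\<And>t. f (t + 2*pi) = f t" and fb: "\<And>t. cmod (f t) \<le> 1"
    using assms(3) unfolding PF_def by auto
  have gm[measurable]: "g \<in> borel_measurable borel" and pg0: "\<And>t. g (t + 2*pi) = g t" and gb: "\<And>t. cmod (g t) \<le> 1"
    using assms(4) unfolding PF_def by auto
  have bf: "bnd f" unfolding bnd_def using fm fb by blast
  have bg: "bnd g" unfolding bnd_def using gm gb by blast
  have pf: "per f" unfolding per_def using pf0 by blast
  have pg: "per g" unfolding per_def using pg0 by blast
  define v where "v = x - y"
  define c where "c u = IP (\<lambda>t. f (t + u)) g" for u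
  define \<Phi> where "\<Phi> q = f (fst q \<bullet> x + snd q) * cnj (g (fst q \<bullet> y + snd q))" for q :: "'a \<times> real"
  define E where "E = expected_kernel m \<Lambda> f g x y"
  have Deq: "freq_dither \<Lambda> = \<Lambda> \<Otimes>\<^sub>M UU" unfolding freq_dither_def UU_def ..
  have PD: "prob_space (\<Lambda> \<Otimes>\<^sub>M UU)" by (intro prob_space_pair LP prob_space_UU)
  have PS: "pair_sigma_finite \<Lambda> UU"
    by (intro pair_sigma_finite.intro prob_space_imp_sigma_finite LP prob_space_UU)
  have sD: "sets (\<Lambda> \<Otimes>\<^sub>M UU) = sets (borel \<Otimes>\<^sub>M borel)"
    by (intro sets_pair_measure_cong assms(2) sets_UU)
  have \<Phi>m[measurable]: "\<Phi> \<in> borel_measurable (\<Lambda> \<Otimes>\<^sub>M UU)"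
    unfolding measurable_cong_sets[OF sD refl] \<Phi>_def by measurable
  have \<Phi>b: "cmod (\<Phi> q) \<le> 1" for q
    unfolding \<Phi>_def using fb gb by (simp add: norm_mult mult_le_one)
  have \<Phi>i: "integrable (\<Lambda> \<Otimes>\<^sub>M UU) \<Phi>"
    by (rule finite_measure.integrable_const_bound[OF prob_space.finite_measure[OF PD], of _ 1]) (auto simp: \<Phi>b)
  have E1: "E = (LINT q|(\<Lambda> \<Otimes>\<^sub>M UU). \<Phi> q)"
  proof -
    let ?P = "PiM {..<m} (\<lambda>_. \<Lambda> \<Otimes>\<^sub>M UU)"
    have PP: "prob_space ?P" by (intro prob_space_PiM PD)
    have comp: "(LINT p|?P. \<Phi> (p j)) = (LINT q|(\<Lambda> \<Otimes>\<^sub>M UU). \<Phi> q)" if j: "j < m" for j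
    proof -
      have "distr ?P (\<Lambda> \<Otimes>\<^sub>M UU) (\<lambda>p. p j) = \<Lambda> \<Otimes>\<^sub>M UU"
        by (rule distr_PiM_component) (use PD j in auto)
      moreover have "(LINT q|distr ?P (\<Lambda> \<Otimes>\<^sub>M UU) (\<lambda>p. p j). \<Phi> q) = (LINT p|?P. \<Phi> (p j))"
        by (rule integral_distr) (use j in \<open>auto intro: measurable_component_singleton\<close>)
      ultimately show ?thesis by simp
    qed
    have sq: "complex_of_real (sqrt (real m)) * complex_of_real (sqrt (real m)) = of_nat m"
      by (simp flip: of_real_mult)
    have rp: "rpf m f p x j * cnj (rpf m g p y j) = \<Phi> (p j) / of_nat m" for p j
    proof -
      have "rpf m f p x j * cnj (rpf m g p y j) = \<Phi> (p j) / (complex_of_real (sqrt (real m)) * complex_of_real (sqrt (real m)))"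
        unfolding rpf_def \<Phi>_def by (simp add: add.commute)
      then show ?thesis unfolding sq .
    qed
    have int: "integrable ?P (\<lambda>p. \<Phi> (p j) / of_nat m)" if j: "j \<in> {..<m}" for j
    proof (rule finite_measure.integrable_const_bound[OF prob_space.finite_measure[OF PP], of _ 1])
      have "m \<ge> 1" by (rule assms(5))
      then show "AE p in ?P. cmod (\<Phi> (p j) / of_nat m) \<le> 1"
      proof (intro AE_I2)
        fix p
        have "cmod (\<Phi> (p j)) \<le> 1" by (rule \<Phi>b)
        also have "1 \<le> real m" using \<open>m \<ge> 1\<close> by simp
        finally have "cmod (\<Phi> (p j)) \<le> real m" .
        then show "cmod (\<Phi> (p j) / of_nat m) \<le> 1" using \<open>m \<ge> 1\<close> by (simp add: norm_divide divide_le_eq)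
      qed
      have "(\<lambda>p. p j) \<in> ?P \<rightarrow>\<^sub>M (\<Lambda> \<Otimes>\<^sub>M UU)"
        using measurable_component_singleton[of j "{..<m}" "\<lambda>_. \<Lambda> \<Otimes>\<^sub>M UU"] j by simp
      then have "(\<lambda>p. \<Phi> (p j)) \<in> borel_measurable ?P" using \<Phi>m by (rule measurable_compose)
      then show "(\<lambda>p. \<Phi> (p j) / of_nat m) \<in> borel_measurable ?P"
        by (intro borel_measurable_divide) simp_all
    qed
    have "E = (LINT p|?P. (\<Sum>j<m. \<Phi> (p j) / of_nat m))"
      unfolding E_def expected_kernel_def Deq rp ..
    also have "\<dots> = (\<Sum>j<m. (LINT p|?P. \<Phi> (p j)) / of_nat m)"
      by (subst Bochner_Integration.integral_sum) (auto intro: int simp: integral_divide_zero)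
    also have "\<dots> = (\<Sum>j<m. (LINT q|(\<Lambda> \<Otimes>\<^sub>M UU). \<Phi> q) / of_nat m)"
      by (intro sum.cong refl) (simp add: comp)
    also have "\<dots> = (LINT q|(\<Lambda> \<Otimes>\<^sub>M UU). \<Phi> q)" using assms(5) by simp
    finally show ?thesis .
  qed
  have inner: "(LINT \<xi>|UU. \<Phi> (w, \<xi>)) = c (w \<bullet> v)" for w
  proof -
    have "(LINT \<xi>|UU. \<Phi> (w, \<xi>)) = (LINT \<xi>|UU. (\<lambda>t. f (t + w \<bullet> v) * cnj (g t)) (\<xi> + w \<bullet> y))"
      unfolding \<Phi>_def v_def by (intro Bochner_Integration.integral_cong) (auto simp: inner_diff_right algebra_simps)
    also have "\<dots> = (LINT t|UU. f (t + w \<bullet> v) * cnj (g t))"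
      by (intro bnd_UU_shift bnd_mult bnd_cnj bnd_shift bf bg per_mult per_cnj per_shift pf pg)
    finally show ?thesis unfolding c_def IP_def .
  qed
  have E2: "E = (LINT w|\<Lambda>. c (w \<bullet> v))"
    using E1 pair_sigma_finite.integral_fst'[OF PS \<Phi>i] inner by simp
  have ci: "integrable \<Lambda> (\<lambda>w. c (w \<bullet> v))"
    using pair_sigma_finite.integrable_fst'[OF PS \<Phi>i] inner by simp
  have cb: "cmod (c u) \<le> 1" for u
    unfolding c_def by (rule IP_le1[OF bnd_shift[OF bf] bg fb gb])
  have FCf: "fourier_coeff f = FC f" "fourier_coeff g = FC g"
    by (auto simp: fun_eq_iff fourier_coeff_UU FC_def)
  have kern: "kernel_of \<Lambda> (of_int k *\<^sub>R (x - y)) = (LINT w|\<Lambda>. cis (of_int k * (w \<bullet> v)))" for k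
    by (simp add: kernel_of_def v_def)
  have cism: "(\<lambda>w. a * cis (of_int k * (w \<bullet> v))) \<in> borel_measurable \<Lambda>" for a k
    unfolding measurable_cong_sets[OF assms(2) refl] by measurable
  have cisi: "integrable \<Lambda> (\<lambda>w. a * cis (of_int k * (w \<bullet> v)))" for a k
    by (rule finite_measure.integrable_const_bound[OF prob_space.finite_measure[OF LP], of _ "cmod a"])
       (auto simp: norm_mult cism)
  have sumS: "(\<Sum>k\<in>S. FC f k * cnj (FC g k) * kernel_of \<Lambda> (of_int k *\<^sub>R (x - y))) =
      (LINT w|\<Lambda>. (\<Sum>k\<in>S. FC f k * cnj (FC g k) * cis (of_int k * (w \<bullet> v))))" for S
    unfolding kern by (subst Bochner_Integration.integral_sum) (auto intro: cisi simp: integral_mult_right_zero)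
  have sumi: "integrable \<Lambda> (\<lambda>w. \<Sum>k\<in>S. FC f k * cnj (FC g k) * cis (of_int k * (w \<bullet> v)))" for S
    by (intro Bochner_Integration.integrable_sum cisi)
  show ?thesis
  proof
    show "((\<lambda>k::int. fourier_coeff f k * cnj (fourier_coeff g k) * kernel_of \<Lambda> (of_int k *\<^sub>R (x - y)))
            has_sum expected_kernel m \<Lambda> f g x y) UNIV"
      unfolding has_sum_def FCf E_def[symmetric]
    proof (rule tendstoI)
      fix e :: real assume e: "e > 0"
      obtain S0 where S0: "finite S0" "\<And>S u. finite S \<Longrightarrow> S0 \<subseteq> S \<Longrightarrow>
          cmod (c u - (\<Sum>k\<in>S. FC f k * cnj (FC g k) * cis (of_int k * u))) < e/2"
        using corr_approx[OF bf pf bg gb, of "e/2"] e unfolding c_def by auto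
      show "eventually (\<lambda>S. dist (\<Sum>k\<in>S. FC f k * cnj (FC g k) * kernel_of \<Lambda> (of_int k *\<^sub>R (x - y))) E < e)
              (finite_subsets_at_top UNIV)"
        unfolding eventually_finite_subsets_at_top
      proof (intro exI conjI allI impI)
        show "finite S0" "S0 \<subseteq> UNIV" using S0(1) by auto
        fix S assume S: "finite S \<and> S0 \<subseteq> S \<and> S \<subseteq> UNIV"
        have "dist (\<Sum>k\<in>S. FC f k * cnj (FC g k) * kernel_of \<Lambda> (of_int k *\<^sub>R (x - y))) E =
              cmod (LINT w|\<Lambda>. c (w \<bullet> v) - (\<Sum>k\<in>S. FC f k * cnj (FC g k) * cis (of_int k * (w \<bullet> v))))"
          unfolding sumS E2 dist_norm
          by (subst Bochner_Integration.integral_diff[OF ci sumi]) (simp add: norm_minus_commute)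
        also have "\<dots> \<le> e/2"
        proof (rule prob_norm_bound[OF LP])
          show "integrable \<Lambda> (\<lambda>w. c (w \<bullet> v) - (\<Sum>k\<in>S. FC f k * cnj (FC g k) * cis (of_int k * (w \<bullet> v))))"
            by (intro Bochner_Integration.integrable_diff ci sumi)
          fix w show "cmod (c (w \<bullet> v) - (\<Sum>k\<in>S. FC f k * cnj (FC g k) * cis (of_int k * (w \<bullet> v)))) \<le> e/2"
            using S0(2)[of S "w \<bullet> v"] S by auto
        qed
        also have "\<dots> < e" using e by simp
        finally show "dist (\<Sum>k\<in>S. FC f k * cnj (FC g k) * kernel_of \<Lambda> (of_int k *\<^sub>R (x - y))) E < e" .
      qed
    qed
    show "norm (expected_kernel m \<Lambda> f g x y) \<le> 1"
      unfolding E_def[symmetric] E2 by (rule prob_norm_bound[OF LP ci cb])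
  qed
qed

end
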